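(* Let $n\ge 3$ and let ${\bf a},{\bf b},{\bf c}$ be sequences of positive integers each with sum at most $n$. If $\mathcal T_{{\bf a},{\bf b},{\bf c}}$ has finitely many $G$-orbits, then one of ${\bf a},{\bf b},{\bf c}$ equals $(1)$ or $(n)$.
   Context: $\mathbb F$ is an infinite field of characteristic $\ne 2$. Equip $\mathbb F^{2n}$ (canonical basis $e_1,\ldots,e_{2n}$) with the symmetric bilinear form $(e_i,e_j)=\delta_{i,2n+1-j}$, and let $G={\rm O}_{2n}(\mathbb F)$ be its isometry group. A subspace $V$ is isotropic if $(V,V)=\{0\}$. For a sequence ${\bf a}=(\alpha_1,\ldots,\alpha_p)$ of positive integers with $\sum\alpha_j\le n$, $M_{\bf a}$ is the set of flags $V_1\subset\cdots\subset V_p$ in $\mathbb F^{2n}$ with $\dim V_j=\alpha_1+\cdots+\alpha_j$ and $V_p$ isotropic. $\mathcal T_{{\bf a},{\bf b},{\bf c}}=M_{\bf a}\times M_{\bf b}\times M_{\bf c}$ with the diagonal $G$-action. *)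

theory Defs
  imports Main
begin

text \<open>Vectors of F^(2n) are functions nat => F vanishing at indices >= 2n
  (index i stands for the basis vector e_(i+1)).\<close>

definition vecs :: "nat \<Rightarrow> (nat \<Rightarrow> 'a::field) set" where
  "vecs n = {v. \<forall>i\<ge>2*n. v i = 0}"

definition vadd :: "(nat \<Rightarrow> 'a::field) \<Rightarrow> (nat \<Rightarrow> 'a) \<Rightarrow> nat \<Rightarrow> 'a" where
  "vadd u v = (\<lambda>i. u i + v i)"

definition vscale :: "'a::field \<Rightarrow> (nat \<Rightarrow> 'a) \<Rightarrow> nat \<Rightarrow> 'a" where
  "vscale c v = (\<lambda>i. c * v i)"

text \<open>The symmetric bilinear form (e_i, e_j) = delta_(i, 2n+1-j) (1-based), i.e.
  indices i, j (0-based) pair iff i + j = 2n - 1.\<close>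
definition bform :: "nat \<Rightarrow> (nat \<Rightarrow> 'a::field) \<Rightarrow> (nat \<Rightarrow> 'a) \<Rightarrow> 'a" where
  "bform n u v = (\<Sum>i<2*n. u i * v (2*n - 1 - i))"

definition is_subspace :: "nat \<Rightarrow> (nat \<Rightarrow> 'a::field) set \<Rightarrow> bool" where
  "is_subspace n V \<longleftrightarrow> V \<subseteq> vecs n \<and> (\<lambda>i. 0) \<in> V \<and>
     (\<forall>u\<in>V. \<forall>v\<in>V. vadd u v \<in> V) \<and> (\<forall>c. \<forall>v\<in>V. vscale c v \<in> V)"

definition lincomb :: "(nat \<Rightarrow> 'a::field) \<Rightarrow> (nat \<Rightarrow> 'a) list \<Rightarrow> nat \<Rightarrow> 'a" where
  "lincomb c bs = (\<lambda>k. \<Sum>i<length bs. c i * (bs ! i) k)"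

definition lin_indep :: "(nat \<Rightarrow> 'a::field) list \<Rightarrow> bool" where
  "lin_indep bs \<longleftrightarrow> (\<forall>c. lincomb c bs = (\<lambda>k. 0) \<longrightarrow> (\<forall>i<length bs. c i = 0))"

definition lspan :: "(nat \<Rightarrow> 'a::field) list \<Rightarrow> (nat \<Rightarrow> 'a) set" where
  "lspan bs = {lincomb c bs | c. True}"

definition has_dim :: "(nat \<Rightarrow> 'a::field) set \<Rightarrow> nat \<Rightarrow> bool" where
  "has_dim V d \<longleftrightarrow> (\<exists>bs. length bs = d \<and> lin_indep bs \<and> lspan bs = V)"

definition isotropic :: "nat \<Rightarrow> (nat \<Rightarrow> 'a::field) set \<Rightarrow> bool" where
  "isotropic n V \<longleftrightarrow> (\<forall>u\<in>V. \<forall>v\<in>V. bform n u v = 0)"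

definition orth_group :: "nat \<Rightarrow> ((nat \<Rightarrow> 'a::field) \<Rightarrow> (nat \<Rightarrow> 'a)) set" where
  "orth_group n = {g. bij_betw g (vecs n) (vecs n) \<and>
     (\<forall>u\<in>vecs n. \<forall>v\<in>vecs n. g (vadd u v) = vadd (g u) (g v)) \<and>
     (\<forall>c. \<forall>v\<in>vecs n. g (vscale c v) = vscale c (g v)) \<and>
     (\<forall>u\<in>vecs n. \<forall>v\<in>vecs n. bform n (g u) (g v) = bform n u v)}"

definition flags :: "nat \<Rightarrow> nat list \<Rightarrow> (nat \<Rightarrow> 'a::field) set list set" where
  "flags n a = {Vs. length Vs = length a \<and>
     (\<forall>j<length a. is_subspace n (Vs ! j) \<and> has_dim (Vs ! j) (sum_list (take (Suc j) a))) \<and>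
     (\<forall>j. Suc j < length a \<longrightarrow> Vs ! j \<subseteq> Vs ! Suc j) \<and>
     (Vs \<noteq> [] \<longrightarrow> isotropic n (last Vs))}"

definition triple_space :: "nat \<Rightarrow> nat list \<Rightarrow> nat list \<Rightarrow> nat list \<Rightarrow>
    ((nat \<Rightarrow> 'a::field) set list \<times> (nat \<Rightarrow> 'a) set list \<times> (nat \<Rightarrow> 'a) set list) set" where
  "triple_space n a b c = flags n a \<times> flags n b \<times> flags n c"

definition act_flag :: "((nat \<Rightarrow> 'a) \<Rightarrow> (nat \<Rightarrow> 'a)) \<Rightarrow> (nat \<Rightarrow> 'a) set list \<Rightarrow> (nat \<Rightarrow> 'a) set list" where
  "act_flag g Vs = map (\<lambda>V. g ` V) Vs"

definition triple_orbit :: "nat \<Rightarrow> (nat \<Rightarrow> 'a::field) set list \<times> (nat \<Rightarrow> 'a) set list \<times> (nat \<Rightarrow> 'a) set list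
    \<Rightarrow> ((nat \<Rightarrow> 'a) set list \<times> (nat \<Rightarrow> 'a) set list \<times> (nat \<Rightarrow> 'a) set list) set" where
  "triple_orbit n t = (case t of (X, Y, Z) \<Rightarrow>
     {(act_flag g X, act_flag g Y, act_flag g Z) | g. g \<in> orth_group n})"

definition finitely_many_orbits :: "'a::field itself \<Rightarrow> nat \<Rightarrow> nat list \<Rightarrow> nat list \<Rightarrow> nat list \<Rightarrow> bool" where
  "finitely_many_orbits (TYPE('a)) n a b c \<longleftrightarrow>
     finite ((triple_orbit n :: _ \<Rightarrow> ((nat \<Rightarrow> 'a) set list \<times> _) set) ` triple_space n a b c)"

definition admissible_seq :: "nat \<Rightarrow> nat list \<Rightarrow> bool" where
  "admissible_seq n a \<longleftrightarrow> a \<noteq> [] \<and> (\<forall>x\<in>set a. 0 < x) \<and> sum_list a \<le> n"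

end

theory Submission
  imports Defs
begin


lemma lincomb_apply: "lincomb c bs k = (\<Sum>i<length bs. c i * (bs ! i) k)"
  by (simp add: lincomb_def)

lemma lspan_rel:
  assumes "\<forall>w\<in>set L. \<alpha> * w i = \<beta> * w j" and "v \<in> lspan L"
  shows "\<alpha> * v i = \<beta> * (v j :: 'a::field)"
proof -
  obtain c where v: "v = lincomb c L" using assms(2) by (auto simp: lspan_def)
  have "\<alpha> * v i = (\<Sum>m<length L. c m * (\<alpha> * (L ! m) i))"
    by (simp add: v lincomb_apply sum_distrib_left algebra_simps)
  also have "\<dots> = (\<Sum>m<length L. c m * (\<beta> * (L ! m) j))"
    using assms(1) by (intro sum.cong) auto
  also have "\<dots> = \<beta> * v j"
    by (simp add: v lincomb_apply sum_distrib_left algebra_simps)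
  finally show ?thesis .
qed

lemma lspan_zero:
  assumes "\<forall>w\<in>set L. w i = 0" and "v \<in> lspan L"
  shows "v i = (0::'a::field)"
  using lspan_rel[of L 1 i 0 0 v] assms by auto

lemma in_lspan: assumes "w \<in> set L" shows "w \<in> lspan L"
proof -
  obtain i where i: "i < length L" "L ! i = w" using assms by (auto simp: in_set_conv_nth)
  have "lincomb (\<lambda>j. if j = i then 1 else 0) L = w"
  proof
    fix k
    have "lincomb (\<lambda>j. if j = i then 1 else 0) L k = (\<Sum>j<length L. if j = i then (L ! j) k else 0)"
      unfolding lincomb_def by (intro sum.cong) auto
    also have "\<dots> = w k" using i by simp
    finally show "lincomb (\<lambda>j. if j = i then 1 else 0) L k = w k" .
  qed
  thus ?thesis unfolding lspan_def by blast
qed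

lemma lspan_single: "v \<in> lspan [w] \<longleftrightarrow> (\<exists>c. v = (\<lambda>k. c * w k))"
  by (auto simp: lspan_def lincomb_def)

lemma lspan_add: assumes "u \<in> lspan L" "v \<in> lspan L" shows "vadd u v \<in> lspan L"
proof -
  obtain c d where "u = lincomb c L" "v = lincomb d L" using assms by (auto simp: lspan_def)
  hence "vadd u v = lincomb (\<lambda>i. c i + d i) L"
    by (auto simp: vadd_def lincomb_def algebra_simps sum.distrib)
  thus ?thesis by (auto simp: lspan_def)
qed

lemma lspan_scale: assumes "v \<in> lspan L" shows "vscale a v \<in> lspan L"
proof -
  obtain d where "v = lincomb d L" using assms by (auto simp: lspan_def)
  hence "vscale a v = lincomb (\<lambda>i. a * d i) L"
    by (auto simp: vscale_def lincomb_def algebra_simps sum_distrib_left)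
  thus ?thesis by (auto simp: lspan_def)
qed

lemma lspan_vecs: assumes "set L \<subseteq> vecs n" "v \<in> lspan L" shows "v \<in> vecs n"
  using lspan_zero[of L _ v] assms unfolding vecs_def by auto

lemma lspan_subspace: assumes "set L \<subseteq> vecs n" shows "is_subspace n (lspan L)"
proof -
  have "(\<lambda>i. 0) = lincomb (\<lambda>i. 0) L" by (simp add: lincomb_def)
  hence "(\<lambda>i. 0) \<in> lspan L" by (auto simp: lspan_def)
  thus ?thesis using assms lspan_vecs lspan_add lspan_scale unfolding is_subspace_def by blast
qed

lemma bform_lincomb_left:
  "bform n (lincomb c L) w = (\<Sum>i<length L. c i * bform n (L ! i) w)"
  unfolding bform_def lincomb_def
  by (simp add: sum_distrib_left sum_distrib_right algebra_simps) (rule sum.swap)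

lemma bform_sym: "bform n u v = bform n v (u :: nat \<Rightarrow> 'a::field)"
proof -
  have "bform n u v = (\<Sum>i<2*n. u (2*n-1-i) * v (2*n-1-(2*n-1-i)))"
    unfolding bform_def
    by (rule sum.reindex_bij_witness[where i="\<lambda>i. 2*n-1-i" and j="\<lambda>i. 2*n-1-i"]) auto
  also have "\<dots> = bform n v u" unfolding bform_def
    by (intro sum.cong) (auto simp: mult.commute)
  finally show ?thesis .
qed

lemma bform_lincomb_right:
  "bform n w (lincomb c L) = (\<Sum>i<length L. c i * bform n w (L ! i))"
  using bform_lincomb_left[of n c L w] by (simp add: bform_sym)

lemma lspan_isotropic:
  assumes "\<forall>u\<in>set L. \<forall>v\<in>set L. bform n u v = 0"
  shows "isotropic n (lspan L)"
  unfolding isotropic_def lspan_def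
  using assms by (auto simp: bform_lincomb_left bform_lincomb_right nth_mem intro!: sum.neutral)

lemma lincomb_take:
  "lincomb c (take s L) = lincomb (\<lambda>i. if i < s then c i else 0) L"
proof
  fix k
  have "lincomb (\<lambda>i. if i < s then c i else 0) L k
      = (\<Sum>i\<in>{..<length L} \<inter> {i. i < s}. c i * (L ! i) k)"
    unfolding lincomb_def by (simp add: sum.inter_restrict) (intro sum.cong, auto)
  also have "{..<length L} \<inter> {i. i < s} = {..<length (take s L)}" by auto
  finally show "lincomb c (take s L) k = lincomb (\<lambda>i. if i < s then c i else 0) L k"
    unfolding lincomb_def by simp
qed

lemma lin_indep_take: assumes "lin_indep L" shows "lin_indep (take s L)"
  unfolding lin_indep_def
proof (intro allI impI)
  fix c i assume z: "lincomb c (take s L) = (\<lambda>k. 0)" and i: "i < length (take s L)"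
  have "\<forall>j<length L. (if j < s then c j else 0) = 0"
    using assms z unfolding lin_indep_def lincomb_take by blast
  thus "c i = 0" using i by auto
qed

lemma lspan_take_mono: assumes "s \<le> s'" shows "lspan (take s L) \<subseteq> lspan (take s' L)"
proof
  fix v assume "v \<in> lspan (take s L)"
  then obtain c where v: "v = lincomb c (take s L)" by (auto simp: lspan_def)
  have "v = lincomb (\<lambda>i. if i < s then c i else 0) (take s' L)"
    unfolding v lincomb_take using assms by (intro arg_cong2[where f=lincomb]) auto
  thus "v \<in> lspan (take s' L)" by (auto simp: lspan_def)
qed

lemma lin_indep_tri:
  assumes "\<forall>i<length L. (L ! i) (kf i) \<noteq> (0::'a::field)"
    and "\<forall>i<length L. \<forall>j<length L. i < j \<longrightarrow> (L ! j) (kf i) = 0"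
  shows "lin_indep L"
  unfolding lin_indep_def
proof (intro allI impI)
  fix c i assume z: "lincomb c L = (\<lambda>k. 0)" and "i < length L"
  thus "c i = 0"
  proof (induction i rule: less_induct)
    case (less i)
    have "0 = lincomb c L (kf i)" using z by simp
    also have "\<dots> = (\<Sum>j<length L. c j * (L ! j) (kf i))" by (simp add: lincomb_def)
    also have "\<dots> = (\<Sum>j\<in>{i}. c j * (L ! j) (kf i))"
    proof (rule sum.mono_neutral_right)
      show "\<forall>j\<in>{..<length L} - {i}. c j * (L ! j) (kf i) = 0"
      proof
        fix j assume j: "j \<in> {..<length L} - {i}"
        show "c j * (L ! j) (kf i) = 0"
        proof (cases "j < i")
          case True thus ?thesis using less j by auto
        next
          case False thus ?thesis using assms(2) less j by auto
        qed
      qed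
    qed (use less in auto)
    finally have "c i * (L ! i) (kf i) = 0" by simp
    thus ?case using assms(1) less by auto
  qed
qed

definition ee :: "nat \<Rightarrow> nat \<Rightarrow> 'a::field" where
  "ee k = (\<lambda>i. if i = k then 1 else 0)"

definition Sg :: "nat \<Rightarrow> (nat \<Rightarrow> 'a::field) \<Rightarrow> bool" where
  "Sg n v \<longleftrightarrow> (\<forall>k. n \<le> k \<and> k \<le> 2*n-4 \<longrightarrow> v k = 0)"

lemma sum6:
  assumes "distinct [a,b,c,d,e,f]"
  shows "sum g {a,b,c,d,e,f} = g a + g b + g c + g d + g e + g f"
  using assms by (simp add: add.assoc)

lemma bform_formula:
  assumes n: "n \<ge> 3" and u: "Sg n u" and v: "Sg n v"
  shows "bform n u v = u 0 * v (2*n-1) + u 1 * v (2*n-2) + u 2 * v (2*n-3)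
     + u (2*n-3) * v 2 + u (2*n-2) * v 1 + u (2*n-1) * v 0"
proof -
  let ?f = "\<lambda>i. u i * v (2*n-1-i)"
  let ?K = "{0,1,2,2*n-3,2*n-2,2*n-1}"
  have "bform n u v = sum ?f {..<2*n}" by (simp add: bform_def)
  also have "\<dots> = sum ?f ?K"
  proof (rule sum.mono_neutral_right)
    show "?K \<subseteq> {..<2*n}" using n by auto
    show "\<forall>i\<in>{..<2*n} - ?K. ?f i = 0"
    proof
      fix i assume i: "i \<in> {..<2*n} - ?K"
      show "?f i = 0"
      proof (cases "i < n")
        case True
        hence "n \<le> 2*n-1-i \<and> 2*n-1-i \<le> 2*n-4" using i n by auto
        thus ?thesis using v unfolding Sg_def by auto
      next
        case False
        hence "n \<le> i \<and> i \<le> 2*n-4" using i n by auto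
        thus ?thesis using u unfolding Sg_def by auto
      qed
    qed
  qed simp
  also have "\<dots> = u 0 * v (2*n-1) + u 1 * v (2*n-2) + u 2 * v (2*n-3)
     + u (2*n-3) * v 2 + u (2*n-2) * v 1 + u (2*n-1) * v 0"
  proof -
    have h: "2*n-1-0 = 2*n-1" "2*n-1-1 = 2*n-2" "2*n-1-2 = 2*n-3" "2*n-1-(2*n-3) = 2"
      "2*n-1-(2*n-2) = 1" "2*n-1-(2*n-1) = 0" using n by auto
    have d: "(2::nat) \<noteq> 2*n-3" "(2::nat) \<noteq> 2*n-2" "(2::nat) \<noteq> 2*n-1"
      "(1::nat) \<noteq> 2*n-3" "(1::nat) \<noteq> 2*n-2" "(1::nat) \<noteq> 2*n-1"
      "(0::nat) \<noteq> 2*n-3" "(0::nat) \<noteq> 2*n-2" "(0::nat) \<noteq> 2*n-1"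
      "2*n-3 \<noteq> 2*n-2" "2*n-3 \<noteq> 2*n-1" "2*n-2 \<noteq> 2*n-1" using n by auto
    have "distinct [0,1,2,2*n-3,2*n-2,2*n-1::nat]" using n by auto
    from sum6[OF this, of "\<lambda>i. u i * v (2*n-1-i)"] show ?thesis by (simp only: h)
  qed
  finally show ?thesis .
qed

definition cs :: "nat \<Rightarrow> (nat \<Rightarrow> 'a::field) \<Rightarrow> bool" where
  "cs n v \<longleftrightarrow> (\<forall>k. v k \<noteq> 0 \<longrightarrow> k \<in> {0,1,2,2*n-3,2*n-2,2*n-1})"

lemma cs_Sg: "n \<ge> 3 \<Longrightarrow> cs n v \<Longrightarrow> Sg n v"
  unfolding cs_def Sg_def by force

lemma cs_vecs: "n \<ge> 3 \<Longrightarrow> cs n v \<Longrightarrow> v \<in> vecs n"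
  unfolding cs_def vecs_def by force

lemma ee_tail_Sg: "k < n \<Longrightarrow> Sg n (ee k)"
  unfolding Sg_def ee_def by auto

lemma ee_vecs: "k < 2*n \<Longrightarrow> ee k \<in> vecs n"
  unfolding vecs_def ee_def by auto

lemma ee_tail_orth:
  assumes "n \<ge> 3" "3 \<le> k" "k < n" "Sg n w"
  shows "bform n (ee k) w = 0" "bform n w (ee k) = 0"
proof -
  have "Sg n (ee k)" using assms ee_tail_Sg by auto
  show "bform n (ee k) w = 0"
    using assms by (subst bform_formula[OF assms(1) \<open>Sg n (ee k)\<close> assms(4)]) (auto simp: ee_def)
  thus "bform n w (ee k) = 0" by (simp add: bform_sym)
qed

definition fr :: "nat \<Rightarrow> (nat \<Rightarrow> 'a::field) \<Rightarrow> (nat \<Rightarrow> 'a) \<Rightarrow> (nat \<Rightarrow> 'a) \<Rightarrow> nat \<Rightarrow> nat \<Rightarrow> 'a" where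
  "fr n x q t i = (if i = 0 then x else if i = 1 then q else if i < n - 1 then ee (i+1) else t)"

definition FR :: "nat \<Rightarrow> (nat \<Rightarrow> 'a::field) \<Rightarrow> (nat \<Rightarrow> 'a) \<Rightarrow> (nat \<Rightarrow> 'a) \<Rightarrow> (nat \<Rightarrow> 'a) list" where
  "FR n x q t = map (fr n x q t) [0..<n]"

lemma FR_length[simp]: "length (FR n x q t) = n" by (simp add: FR_def)

lemma FR_nth: "i < n \<Longrightarrow> FR n x q t ! i = fr n x q t i" by (simp add: FR_def)

lemma FR_take: "take s (FR n x q t) = map (fr n x q t) [0..<min s n]"
  by (cases "s \<le> n") (simp_all add: FR_def take_map take_upt min_def)

lemma set_take_FR: "w \<in> set (take s (FR n x q t)) \<longleftrightarrow> (\<exists>i<min s n. w = fr n x q t i)"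
  by (auto simp: FR_take)

lemma FR_x: "1 \<le> s \<Longrightarrow> 1 \<le> n \<Longrightarrow> x \<in> lspan (take s (FR n x q t))"
  by (rule in_lspan) (auto simp: set_take_FR fr_def intro!: exI[of _ 0])

lemma FR_q: "2 \<le> s \<Longrightarrow> 2 \<le> n \<Longrightarrow> q \<in> lspan (take s (FR n x q t))"
  by (rule in_lspan) (auto simp: set_take_FR fr_def intro!: exI[of _ 1])

lemma FR_t: assumes "3 \<le> n" shows "t \<in> lspan (FR n x q t)"
proof -
  have "t \<in> set (take n (FR n x q t))" unfolding set_take_FR
    by (rule exI[of _ "n-1"]) (use assms in \<open>auto simp: fr_def\<close>)
  thus ?thesis using in_lspan by auto
qed

lemma FR_rel:
  assumes "(i < 3 \<or> n \<le> i)" "(j < 3 \<or> n \<le> j)"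
    and "\<alpha> * x i = \<beta> * x j" "\<alpha> * q i = \<beta> * q j"
    and "s \<le> n - 1 \<or> \<alpha> * t i = \<beta> * (t j :: 'a::field)"
  shows "\<forall>w\<in>set (take s (FR n x q t)). \<alpha> * w i = \<beta> * w j"
proof
  fix w assume "w \<in> set (take s (FR n x q t))"
  then obtain k where k: "k < min s n" and w: "w = fr n x q t k" unfolding set_take_FR by blast
  show "\<alpha> * w i = \<beta> * w j"
  proof (cases "k = 0 \<or> k = 1")
    case True thus ?thesis using w assms by (auto simp: fr_def)
  next
    case False
    show ?thesis
    proof (cases "k < n - 1")
      case True
      hence "w = ee (k+1)" "3 \<le> k+1" "k+1 < n" using False w by (auto simp: fr_def)
      thus ?thesis using assms(1,2) by (auto simp: ee_def)
    next
      case F2: False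
      hence "w = t" "\<not> s \<le> n - 1" using False w k by (auto simp: fr_def)
      thus ?thesis using assms(5) by auto
    qed
  qed
qed

lemma FR_good:
  fixes x q t :: "nat \<Rightarrow> 'a::field"
  assumes n: "n \<ge> 3"
    and cx: "cs n x" and cq: "cs n q" and ct: "cs n t"
    and kx: "kx \<in> {0,1,2,2*n-3,2*n-2,2*n-1}" and kq: "kq \<in> {0,1,2,2*n-3,2*n-2,2*n-1}"
    and nz: "x kx \<noteq> 0" "q kq \<noteq> 0" "t kt \<noteq> 0"
    and z: "q kx = 0" "t kx = 0" "t kq = 0"
    and o: "bform n x x = 0" "bform n x q = 0" "bform n x t = 0"
       "bform n q q = 0" "bform n q t = 0" "bform n t t = 0"
  shows "set (FR n x q t) \<subseteq> vecs n" "lin_indep (FR n x q t)"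
    "\<forall>u\<in>set (FR n x q t). \<forall>v\<in>set (FR n x q t). bform n u v = 0"
    "\<forall>u\<in>set (FR n x q t). Sg n u"
proof -
  have setF: "set (FR n x q t) = fr n x q t ` {..<n}" by (auto simp: FR_def)
  have el: "w \<in> set (FR n x q t) \<Longrightarrow> w = x \<or> w = q \<or> w = t \<or> (\<exists>k. 3 \<le> k \<and> k < n \<and> w = ee k)" for w
  proof -
    assume "w \<in> set (FR n x q t)"
    then obtain i where i: "i < n" "w = fr n x q t i" unfolding setF by auto
    show ?thesis
    proof (cases "i = 0 \<or> i = 1")
      case True thus ?thesis using i by (auto simp: fr_def)
    next
      case False
      show ?thesis
      proof (cases "i < n - 1")
        case True
        hence "w = ee (i+1)" "3 \<le> i+1" "i+1 < n" using False i by (auto simp: fr_def)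
        thus ?thesis by blast
      next
        case F2: False thus ?thesis using False i by (auto simp: fr_def)
      qed
    qed
  qed
  show "set (FR n x q t) \<subseteq> vecs n"
  proof
    fix w assume "w \<in> set (FR n x q t)"
    from el[OF this] show "w \<in> vecs n"
    proof (elim disjE exE conjE)
      fix k assume "k < n" "w = ee k"
      thus ?thesis using ee_vecs[of k n] by simp
    qed (use cs_vecs[OF n] cx cq ct in auto)
  qed
  show sg: "\<forall>u\<in>set (FR n x q t). Sg n u"
    using el cs_Sg[OF n] cx cq ct ee_tail_Sg by blast
  show "\<forall>u\<in>set (FR n x q t). \<forall>v\<in>set (FR n x q t). bform n u v = 0"
  proof (intro ballI)
    fix u v assume u: "u \<in> set (FR n x q t)" and v: "v \<in> set (FR n x q t)"
    show "bform n u v = 0"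
    proof (cases "\<exists>k. 3 \<le> k \<and> k < n \<and> u = ee k")
      case True thus ?thesis using ee_tail_orth(1)[OF n] sg v by blast
    next
      case F1: False
      show ?thesis
      proof (cases "\<exists>k. 3 \<le> k \<and> k < n \<and> v = ee k")
        case True thus ?thesis using ee_tail_orth(2)[OF n] sg u by blast
      next
        case False
        thus ?thesis using F1 el[OF u] el[OF v] o by (auto simp: bform_sym)
      qed
    qed
  qed
  define kf where "kf i = (if i = 0 then kx else if i = 1 then kq else if i < n - 1 then i + 1 else kt)" for i
  have core_ne: "k \<in> {0,1,2,2*n-3,2*n-2,2*n-1} \<Longrightarrow> 3 \<le> j \<Longrightarrow> j < n \<Longrightarrow> k \<noteq> j" for k j
    by auto
  show "lin_indep (FR n x q t)"
  proof (rule lin_indep_tri[where kf=kf])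
    show "\<forall>i<length (FR n x q t). (FR n x q t ! i) (kf i) \<noteq> 0"
      using nz by (auto simp: FR_nth fr_def kf_def ee_def)
    show "\<forall>i<length (FR n x q t). \<forall>j<length (FR n x q t). i < j \<longrightarrow> (FR n x q t ! j) (kf i) = 0"
    proof (intro allI impI)
      fix i j assume i: "i < length (FR n x q t)" and j: "j < length (FR n x q t)" and ij: "i < j"
      show "(FR n x q t ! j) (kf i) = 0"
      proof -
        consider "i = 0" | "i = 1" | "2 \<le> i" "i < n - 1" | "n - 1 \<le> i" by linarith
        thus ?thesis
        proof cases
          case 1
          thus ?thesis using ij j z kx core_ne[OF kx, of "j+1"] by (auto simp: FR_nth fr_def kf_def ee_def)
        next
          case 2
          thus ?thesis using ij j z kq core_ne[OF kq, of "j+1"] by (auto simp: FR_nth fr_def kf_def ee_def)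
        next
          case 3
          have "t (i+1) = 0" using ct 3 n unfolding cs_def by force
          thus ?thesis using ij j 3 by (auto simp: FR_nth fr_def kf_def ee_def)
        next
          case 4 thus ?thesis using ij j by auto
        qed
      qed
    qed
  qed
qed

definition psum :: "nat list \<Rightarrow> nat \<Rightarrow> nat" where
  "psum a j = sum_list (take (Suc j) a)"

definition flag_of :: "nat \<Rightarrow> (nat \<Rightarrow> 'a::field) list \<Rightarrow> nat list \<Rightarrow> (nat \<Rightarrow> 'a) set list" where
  "flag_of n F a = map (\<lambda>j. lspan (take (psum a j) F)) [0..<length a]"

lemma psum_le: "psum a j \<le> sum_list a"
proof -
  have "sum_list a = sum_list (take (Suc j) a) + sum_list (drop (Suc j) a)"
    by (metis append_take_drop_id sum_list_append)
  thus ?thesis unfolding psum_def by simp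
qed

lemma psum_Suc: "Suc j < length a \<Longrightarrow> psum a (Suc j) = psum a j + a ! Suc j"
  unfolding psum_def by (simp add: take_Suc_conv_app_nth)

lemma flag_of_in:
  assumes F: "length F = n" "set F \<subseteq> vecs n" "lin_indep F"
     "\<forall>u\<in>set F. \<forall>v\<in>set F. bform n u v = 0"
    and a: "admissible_seq n a"
  shows "flag_of n F a \<in> flags n a"
proof -
  have sle: "psum a j \<le> n" for j using psum_le[of a j] a by (auto simp: admissible_seq_def)
  have sub: "set (take s F) \<subseteq> vecs n" for s using F(2) by (meson order_trans set_take_subset)
  have dim: "has_dim (lspan (take (psum a j) F)) (psum a j)" for j
    unfolding has_dim_def using sle[of j] F lin_indep_take by (intro exI[of _ "take (psum a j) F"]) auto
  have mono: "Suc j < length a \<Longrightarrow> lspan (take (psum a j) F) \<subseteq> lspan (take (psum a (Suc j)) F)" for j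
    by (rule lspan_take_mono) (simp add: psum_Suc)
  have iso: "isotropic n (lspan (take s F))" for s
    by (rule lspan_isotropic) (use F(4) in \<open>meson in_set_takeD\<close>)
  have ne: "a \<noteq> []" using a by (simp add: admissible_seq_def)
  show ?thesis unfolding flags_def flag_of_def
    using dim mono iso lspan_subspace[OF sub] ne by (auto simp: last_map psum_def)
qed

lemma pos_sum_zero: "\<forall>x\<in>set l. 0 < (x::nat) \<Longrightarrow> sum_list l = 0 \<Longrightarrow> l = []"
  by (cases l) auto

lemma seq_type:
  assumes a: "admissible_seq n a" and "a \<noteq> [1]" "a \<noteq> [n]"
  shows "(\<exists>j<length a. 2 \<le> psum a j \<and> psum a j \<le> n - 1) \<or> a = [1, n - 1]"
proof -
  obtain x r where ar: "a = x # r" using a by (cases a) (auto simp: admissible_seq_def)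
  have x: "0 < x" "x + sum_list r \<le> n" "\<forall>y\<in>set r. 0 < y" using a ar by (auto simp: admissible_seq_def)
  have p0: "psum a 0 = x" by (simp add: psum_def ar)
  show ?thesis
  proof (cases "2 \<le> x \<and> x \<le> n - 1")
    case True thus ?thesis using p0 ar by force
  next
    case False
    hence "x = 1 \<or> x = n" using x by auto
    thus ?thesis
    proof
      assume "x = n"
      hence "r = []" using x pos_sum_zero[of r] by auto
      thus ?thesis using \<open>x = n\<close> ar assms by auto
    next
      assume x1: "x = 1"
      then obtain y r' where r: "r = y # r'" using ar assms by (cases r) auto
      have p1: "psum a 1 = 1 + y" by (simp add: psum_def ar r x1)
      show ?thesis
      proof (cases "1 + y \<le> n - 1")
        case True
        have "0 < y" using x r by auto
        thus ?thesis using True p1 ar r by (intro disjI1 exI[of _ 1]) auto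
      next
        case False
        have "y + sum_list r' \<le> n - 1" using x x1 r by auto
        hence "y = n - 1" "sum_list r' = 0" using False by linarith+
        hence "r' = []" using x r pos_sum_zero[of r'] by auto
        thus ?thesis using ar r x1 \<open>y = n - 1\<close> by auto
      qed
    qed
  qed
qed

lemma lspan_FR_rel:
  assumes "(i < 3 \<or> n \<le> i)" "(j < 3 \<or> n \<le> j)"
    and "\<alpha> * x i = \<beta> * x j" "\<alpha> * q i = \<beta> * q j"
    and "s \<le> n - 1 \<or> \<alpha> * t i = \<beta> * (t j :: 'a::field)"
    and "v \<in> lspan (take s (FR n x q t))"
  shows "\<alpha> * v i = \<beta> * v j"
  using lspan_rel[OF FR_rel[OF assms(1-5)] assms(6)] .

lemma lspan_FR_Sg:
  assumes "Sg n x" "Sg n q" "Sg n t" "v \<in> lspan (take s (FR n x q t))"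
  shows "Sg n v"
  unfolding Sg_def
proof (intro allI impI)
  fix k assume k: "n \<le> k \<and> k \<le> 2 * n - 4"
  show "v k = 0"
    using lspan_FR_rel[of k n 0 1 x 0 q s t v] assms k unfolding Sg_def by auto
qed

lemma lspan_FR_vecs:
  assumes "set (FR n x q t) \<subseteq> vecs n" "v \<in> lspan (take s (FR n x q t))"
  shows "v \<in> vecs n"
  using lspan_vecs[of "take s (FR n x q t)" n v] assms by (meson order_trans set_take_subset)

definition xa :: "'a::field \<Rightarrow> nat \<Rightarrow> 'a" where
  "xa l = (\<lambda>i. if i = 0 then 1 else if i = 1 then l else 0)"
definition xb :: "nat \<Rightarrow> 'a::field" where
  "xb = (\<lambda>i. if i = 0 then 1 else if i = 2 then 1 else 0)"
definition xc :: "nat \<Rightarrow> 'a::field" where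
  "xc = (\<lambda>i. if i = 1 then 1 else if i = 2 then 1 else 0)"

definition G1 :: "nat \<Rightarrow> 'a::field \<Rightarrow> (nat \<Rightarrow> 'a) list" where
  "G1 n l = FR n (xa l) (ee (2*n-3)) (ee 0)"
definition G2 :: "nat \<Rightarrow> (nat \<Rightarrow> 'a::field) list" where
  "G2 n = FR n xb (ee (2*n-2)) (ee 0)"
definition G3 :: "nat \<Rightarrow> (nat \<Rightarrow> 'a::field) list" where
  "G3 n = FR n xc (ee (2*n-1)) (ee 1)"

definition W1c :: "nat \<Rightarrow> (nat \<Rightarrow> 'a::field) \<Rightarrow> bool" where
  "W1c n v \<longleftrightarrow> v 2 = 0 \<and> v (2*n-2) = 0 \<and> v (2*n-1) = 0"
definition W2c :: "nat \<Rightarrow> (nat \<Rightarrow> 'a::field) \<Rightarrow> bool" where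
  "W2c n v \<longleftrightarrow> v 1 = 0 \<and> v (2*n-3) = 0 \<and> v (2*n-1) = 0"
definition W3c :: "nat \<Rightarrow> (nat \<Rightarrow> 'a::field) \<Rightarrow> bool" where
  "W3c n v \<longleftrightarrow> v 0 = 0 \<and> v (2*n-3) = 0 \<and> v (2*n-2) = 0"

lemma cs_xa: "cs n (xa l)" by (auto simp: cs_def xa_def)
lemma cs_xb: "cs n xb" by (auto simp: cs_def xb_def)
lemma cs_xc: "cs n xc" by (auto simp: cs_def xc_def)
lemma cs_ee: "k \<in> {0,1,2,2*n-3,2*n-2,2*n-1} \<Longrightarrow> cs n (ee k)" by (auto simp: cs_def ee_def)

lemma cs_ee0: "cs n (ee 0)" and cs_ee1: "cs n (ee 1)" and cs_ee2: "cs n (ee 2)"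
  and cs_eeA: "cs n (ee (2*n-3))" and cs_eeB: "cs n (ee (2*n-2))" and cs_eeC: "cs n (ee (2*n-1))"
  by (auto simp: cs_def ee_def)

lemmas cs_all = cs_xa cs_xb cs_xc cs_ee0 cs_ee1 cs_ee2 cs_eeA cs_eeB cs_eeC

lemma bform_cs:
  assumes "n \<ge> 3" "cs n u" "cs n v"
  shows "bform n u v = u 0 * v (2*n-1) + u 1 * v (2*n-2) + u 2 * v (2*n-3)
     + u (2*n-3) * v 2 + u (2*n-2) * v 1 + u (2*n-1) * v 0"
  using bform_formula cs_Sg assms by blast

lemma idx_ne: assumes "n \<ge> 3" shows "((0::nat) = Suc 0) = False" "((0::nat) = 2) = False" "((0::nat) = 2*n-3) = False" "((0::nat) = 2*n-2) = False" "((0::nat) = 2*n - Suc 0) = False" "((Suc 0::nat) = 0) = False" "((Suc 0::nat) = 2) = False" "((Suc 0::nat) = 2*n-3) = False" "((Suc 0::nat) = 2*n-2) = False" "((Suc 0::nat) = 2*n - Suc 0) = False" "((2::nat) = 0) = False" "((2::nat) = Suc 0) = False" "((2::nat) = 2*n-3) = False" "((2::nat) = 2*n-2) = False" "((2::nat) = 2*n - Suc 0) = False" "((2*n-3::nat) = 0) = False" "((2*n-3::nat) = Suc 0) = False" "((2*n-3::nat) = 2) = False" "((2*n-3::nat) = 2*n-2) = False" "((2*n-3::nat) = 2*n - Suc 0) = False" "((2*n-2::nat) = 0) = False" "((2*n-2::nat) = Suc 0) = False" "((2*n-2::nat) = 2) = False" "((2*n-2::nat) = 2*n-3) = False" "((2*n-2::nat)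 = 2*n - Suc 0) = False" "((2*n - Suc 0::nat) = 0) = False" "((2*n - Suc 0::nat) = Suc 0) = False" "((2*n - Suc 0::nat) = 2) = False" "((2*n - Suc 0::nat) = 2*n-3) = False" "((2*n - Suc 0::nat) = 2*n-2) = False"
  using assms by auto

lemma G1_good:
  assumes n: "n \<ge> 3" and l: "l \<noteq> 0"
  shows "set (G1 n l) \<subseteq> vecs n" "lin_indep (G1 n l)"
    "\<forall>u\<in>set (G1 n l). \<forall>v\<in>set (G1 n l). bform n u v = 0"
    "\<forall>u\<in>set (G1 n l). Sg n u"
  unfolding G1_def
  by (rule FR_good[where kx=1 and kq="2*n-3" and kt=0, OF n cs_xa cs_ee cs_ee];
      use n l in \<open>(simp only: bform_cs[OF n] cs_all)?; simp add: xa_def ee_def idx_ne[OF n]\<close>)+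

lemma G2_good:
  assumes n: "n \<ge> 3"
  shows "set (G2 n) \<subseteq> vecs n" "lin_indep (G2 n)"
    "\<forall>u\<in>set (G2 n). \<forall>v\<in>set (G2 n). bform n u v = 0"
    "\<forall>u\<in>set (G2 n). Sg n u"
  unfolding G2_def
  by (rule FR_good[where kx=2 and kq="2*n-2" and kt=0, OF n cs_xb cs_ee cs_ee];
      use n in \<open>(simp only: bform_cs[OF n] cs_all)?; simp add: xb_def ee_def idx_ne[OF n]\<close>)+

lemma G3_good:
  assumes n: "n \<ge> 3"
  shows "set (G3 n) \<subseteq> vecs n" "lin_indep (G3 n)"
    "\<forall>u\<in>set (G3 n). \<forall>v\<in>set (G3 n). bform n u v = 0"
    "\<forall>u\<in>set (G3 n). Sg n u"
  unfolding G3_def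
  by (rule FR_good[where kx=2 and kq="2*n-1" and kt=1, OF n cs_xc cs_ee cs_ee];
      use n in \<open>(simp only: bform_cs[OF n] cs_all)?; simp add: xc_def ee_def idx_ne[OF n]\<close>)+

lemma orth_vecs: "g \<in> orth_group n \<Longrightarrow> v \<in> vecs n \<Longrightarrow> g v \<in> vecs n"
  unfolding orth_group_def bij_betw_def by auto
lemma orth_add: "g \<in> orth_group n \<Longrightarrow> u \<in> vecs n \<Longrightarrow> v \<in> vecs n \<Longrightarrow> g (vadd u v) = vadd (g u) (g v)"
  unfolding orth_group_def by auto
lemma orth_scale: "g \<in> orth_group n \<Longrightarrow> v \<in> vecs n \<Longrightarrow> g (vscale c v) = vscale c (g v)"
  unfolding orth_group_def by auto
lemma orth_bform: "g \<in> orth_group n \<Longrightarrow> u \<in> vecs n \<Longrightarrow> v \<in> vecs n \<Longrightarrow> bform n (g u) (g v) = bform n u v"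
  unfolding orth_group_def by auto
lemma orth_inj: "g \<in> orth_group n \<Longrightarrow> u \<in> vecs n \<Longrightarrow> v \<in> vecs n \<Longrightarrow> g u = g v \<Longrightarrow> u = v"
  unfolding orth_group_def bij_betw_def inj_on_def by auto
lemma zero_vecs: "(\<lambda>i. 0) \<in> vecs n" by (simp add: vecs_def)
lemma orth_zero: assumes "g \<in> orth_group n" shows "g (\<lambda>i. 0) = (\<lambda>i. (0::'a::field))"
proof -
  have "g (\<lambda>i. 0) = g (vscale 0 (\<lambda>i. 0))" by (simp add: vscale_def)
  also have "\<dots> = vscale 0 (g (\<lambda>i. 0))" using orth_scale[OF assms zero_vecs] .
  finally show ?thesis by (simp add: vscale_def)
qed
lemma orth_nz: "g \<in> orth_group n \<Longrightarrow> v \<in> vecs n \<Longrightarrow> v \<noteq> (\<lambda>i. 0) \<Longrightarrow> g v \<noteq> (\<lambda>i. (0::'a::field))"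
proof
  assume g: "g \<in> orth_group n" and v: "v \<in> vecs n" "v \<noteq> (\<lambda>i. 0)" and z: "g v = (\<lambda>i. 0)"
  have "g v = g (\<lambda>i. 0)" using z orth_zero[OF g] by simp
  thus False using orth_inj[OF g v(1) zero_vecs] v(2) by simp
qed

lemma perp_transfer:
  assumes g: "g \<in> orth_group n" and B: "B \<subseteq> vecs n" and v: "v \<in> vecs n"
    and p: "\<forall>u\<in>B. bform n v u = 0" and im: "g ` B = B'" and u': "u' \<in> B'"
  shows "bform n (g v) u' = 0"
proof -
  obtain u where "u \<in> B" "u' = g u" using im u' by auto
  thus ?thesis using orth_bform[OF g v] B p by auto
qed

lemma G1_coord:
  assumes n: "n \<ge> 3" and v: "v \<in> lspan (take s (G1 n l))"
  shows "W1c n v" "Sg n v" "s \<le> n - 1 \<Longrightarrow> v 1 = l * v 0"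
proof -
  note R = lspan_FR_rel[where x="xa l" and q="ee (2*n-3)" and t="ee 0", OF _ _ _ _ _ v[unfolded G1_def]]
  have a: "1 * v 2 = 0 * v 0" by (rule R) (use n in \<open>auto simp: xa_def ee_def idx_ne[OF n]\<close>)
  have b: "1 * v (2*n-2) = 0 * v 0" by (rule R) (use n in \<open>auto simp: xa_def ee_def idx_ne[OF n]\<close>)
  have c: "1 * v (2*n-1) = 0 * v 0" by (rule R) (use n in \<open>auto simp: xa_def ee_def idx_ne[OF n]\<close>)
  show "W1c n v" using a b c by (simp add: W1c_def)
  show "Sg n v" using lspan_FR_Sg[OF _ _ _ v[unfolded G1_def]] cs_Sg[OF n] cs_all by blast
  assume "s \<le> n - 1"
  have "1 * v 1 = l * v 0" by (rule R) (use n \<open>s \<le> n - 1\<close> in \<open>auto simp: xa_def ee_def idx_ne[OF n]\<close>)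
  thus "v 1 = l * v 0" by simp
qed

lemma G2_coord:
  assumes n: "n \<ge> 3" and v: "v \<in> lspan (take s (G2 n))"
  shows "W2c n v" "Sg n v" "s \<le> n - 1 \<Longrightarrow> v 2 = v 0"
proof -
  note R = lspan_FR_rel[where x="xb" and q="ee (2*n-2)" and t="ee 0", OF _ _ _ _ _ v[unfolded G2_def]]
  have a: "1 * v 1 = 0 * v 0" by (rule R) (use n in \<open>auto simp: xb_def ee_def idx_ne[OF n]\<close>)
  have b: "1 * v (2*n-3) = 0 * v 0" by (rule R) (use n in \<open>auto simp: xb_def ee_def idx_ne[OF n]\<close>)
  have c: "1 * v (2*n-1) = 0 * v 0" by (rule R) (use n in \<open>auto simp: xb_def ee_def idx_ne[OF n]\<close>)
  show "W2c n v" using a b c by (simp add: W2c_def)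
  show "Sg n v" using lspan_FR_Sg[OF _ _ _ v[unfolded G2_def]] cs_Sg[OF n] cs_all by blast
  assume "s \<le> n - 1"
  have "1 * v 2 = 1 * v 0" by (rule R) (use n \<open>s \<le> n - 1\<close> in \<open>auto simp: xb_def ee_def idx_ne[OF n]\<close>)
  thus "v 2 = v 0" by simp
qed

lemma G3_coord:
  assumes n: "n \<ge> 3" and v: "v \<in> lspan (take s (G3 n))"
  shows "W3c n v" "Sg n v" "s \<le> n - 1 \<Longrightarrow> v 2 = v 1"
proof -
  note R = lspan_FR_rel[where x="xc" and q="ee (2*n-1)" and t="ee 1", OF _ _ _ _ _ v[unfolded G3_def]]
  have a: "1 * v 0 = 0 * v 1" by (rule R) (use n in \<open>auto simp: xc_def ee_def idx_ne[OF n]\<close>)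
  have b: "1 * v (2*n-3) = 0 * v 0" by (rule R) (use n in \<open>auto simp: xc_def ee_def idx_ne[OF n]\<close>)
  have c: "1 * v (2*n-2) = 0 * v 0" by (rule R) (use n in \<open>auto simp: xc_def ee_def idx_ne[OF n]\<close>)
  show "W3c n v" using a b c by (simp add: W3c_def)
  show "Sg n v" using lspan_FR_Sg[OF _ _ _ v[unfolded G3_def]] cs_Sg[OF n] cs_all by blast
  assume "s \<le> n - 1"
  have "1 * v 2 = 1 * v 1" by (rule R) (use n \<open>s \<le> n - 1\<close> in \<open>auto simp: xc_def ee_def idx_ne[OF n]\<close>)
  thus "v 2 = v 1" by simp
qed




lemma bf_ee:
  assumes n: "n \<ge> 3" and v: "Sg n v"
  shows "bform n v (ee (2*n-3)) = v 2" "bform n v (ee (2*n-2)) = v 1" "bform n v (ee (2*n-1)) = v 0"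
    "bform n (ee 0) v = v (2*n-1)" "bform n (ee 1) v = v (2*n-2)" "bform n (ee 2) v = v (2*n-3)"
    "bform n v (xa m) = v (2*n-1) + m * v (2*n-2)" "bform n v xb = v (2*n-1) + v (2*n-3)"
    "bform n v xc = v (2*n-2) + v (2*n-3)"
proof -
  note S = cs_Sg[OF n]
  show "bform n v (ee (2*n-3)) = v 2"
    by (subst bform_formula[OF n v S[OF cs_eeA]]) (use n in \<open>auto simp: ee_def idx_ne[OF n]\<close>)
  show "bform n v (ee (2*n-2)) = v 1"
    by (subst bform_formula[OF n v S[OF cs_eeB]]) (use n in \<open>auto simp: ee_def idx_ne[OF n]\<close>)
  show "bform n v (ee (2*n-1)) = v 0"
    by (subst bform_formula[OF n v S[OF cs_eeC]]) (use n in \<open>auto simp: ee_def idx_ne[OF n]\<close>)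
  show "bform n (ee 0) v = v (2*n-1)"
    by (subst bform_formula[OF n S[OF cs_ee0] v]) (use n in \<open>auto simp: ee_def idx_ne[OF n]\<close>)
  show "bform n (ee 1) v = v (2*n-2)"
    by (subst bform_formula[OF n S[OF cs_ee1] v]) (use n in \<open>auto simp: ee_def idx_ne[OF n]\<close>)
  show "bform n (ee 2) v = v (2*n-3)"
    by (subst bform_formula[OF n S[OF cs_ee2] v]) (use n in \<open>auto simp: ee_def idx_ne[OF n]\<close>)
  show "bform n v (xa m) = v (2*n-1) + m * v (2*n-2)"
    using n by (subst bform_formula[OF n v S[OF cs_xa]]) (simp add: xa_def idx_ne[OF n])
  show "bform n v xb = v (2*n-1) + v (2*n-3)"
    using n by (subst bform_formula[OF n v S[OF cs_xb]]) (simp add: xb_def idx_ne[OF n])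
  show "bform n v xc = v (2*n-2) + v (2*n-3)"
    using n by (subst bform_formula[OF n v S[OF cs_xc]]) (simp add: xc_def idx_ne[OF n])
qed

lemma vecs_all: "n \<ge> 3 \<Longrightarrow> xa l \<in> vecs n" "n \<ge> 3 \<Longrightarrow> xb \<in> vecs n" "n \<ge> 3 \<Longrightarrow> xc \<in> vecs n"
  "n \<ge> 3 \<Longrightarrow> ee 0 \<in> vecs n" "n \<ge> 3 \<Longrightarrow> ee 1 \<in> vecs n" "n \<ge> 3 \<Longrightarrow> ee 2 \<in> vecs n"
  using cs_vecs cs_all by blast+

lemma vecs_vadd: "u \<in> vecs n \<Longrightarrow> v \<in> vecs n \<Longrightarrow> vadd u v \<in> vecs n"
  by (simp add: vecs_def vadd_def)
lemma vecs_vscale: "v \<in> vecs n \<Longrightarrow> vscale c v \<in> vecs n"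
  by (simp add: vecs_def vscale_def)

lemma case3:
  fixes l m :: "'a::field"
  assumes n: "n \<ge> 3" and g: "g \<in> orth_group n" and l: "l \<noteq> 0"
    and B1: "g ` lspan (take s1 (G1 n l)) = lspan (take s1 (G1 n m))" "2 \<le> s1"
    and B2: "g ` lspan (take s2 (G2 n)) = lspan (take s2 (G2 n))" "2 \<le> s2"
    and U1: "g (xa l) 1 = m * g (xa l) 0" "g (xa l) 2 = 0"
    and U2: "g xb 1 = 0" "g xb 2 = g xb 0"
    and L3a: "g ` lspan (take 1 (G3 n)) = lspan (take 1 (G3 n))"
    and L3b: "g ` lspan (take n (G3 n)) = lspan (take n (G3 n))"
  shows "l = m"
proof -
  note V = vecs_all[OF n]
  have "xc \<in> lspan (take 1 (G3 n))" unfolding G3_def by (rule FR_x) (use n in auto)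
  hence "g xc \<in> lspan (take 1 (G3 n))" using L3a by blast
  moreover have "take 1 (G3 n) = [xc]" using n by (simp add: G3_def FR_take fr_def)
  ultimately have "g xc \<in> lspan [xc]" by metis
  then obtain k where k: "g xc = (\<lambda>i. k * xc i)" using lspan_single by blast
  have k0: "k \<noteq> 0"
  proof
    assume "k = 0"
    hence "g xc = (\<lambda>i. 0)" using k by simp
    moreover have "xc \<noteq> (\<lambda>i. (0::'a))" by (metis xc_def one_neq_zero)
    ultimately show False using orth_nz[OF g V(3)] by blast
  qed
  have W3: "ee 1 \<in> lspan (take n (G3 n))" "xc \<in> lspan (take n (G3 n))"
    using FR_t[OF n] FR_x[of n n] n by (auto simp: G3_def)
  have e2: "ee 2 = vadd xc (vscale (-1) (ee 1))"
    by (rule ext) (simp add: vadd_def vscale_def ee_def xc_def)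
  have W3': "ee 2 \<in> lspan (take n (G3 n))" unfolding e2 by (intro lspan_add lspan_scale W3)
  have g1: "g (ee 1) \<in> lspan (take n (G3 n))" "g (ee 2) \<in> lspan (take n (G3 n))"
    using W3 W3' L3b by blast+
  have g1c: "g (ee 1) 0 = 0" "g (ee 2) 0 = 0" "Sg n (g (ee 1))" "Sg n (g (ee 2))"
    using G3_coord[OF n g1(1)] G3_coord[OF n g1(2)] by (auto simp: W3c_def)
  have sub1: "lspan (take s1 (G1 n l)) \<subseteq> vecs n"
    using lspan_FR_vecs G1_good(1)[OF n l] unfolding G1_def by blast
  have sub2: "lspan (take s2 (G2 n)) \<subseteq> vecs n"
    using lspan_FR_vecs G2_good(1)[OF n] unfolding G2_def by blast
  have p1: "\<forall>u\<in>lspan (take s1 (G1 n l)). bform n (ee 1) u = 0"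
  proof
    fix u assume u: "u \<in> lspan (take s1 (G1 n l))"
    have "Sg n u" "W1c n u" using G1_coord[OF n u] by auto
    thus "bform n (ee 1) u = 0" unfolding bf_ee[OF n \<open>Sg n u\<close>] by (simp add: W1c_def)
  qed
  have q1: "ee (2*n-3) \<in> lspan (take s1 (G1 n m))" unfolding G1_def by (rule FR_q) (use n B1 in auto)
  have "bform n (g (ee 1)) (ee (2*n-3)) = 0" by (rule perp_transfer[OF g sub1 V(5) p1 B1(1) q1])
  hence a1: "g (ee 1) 2 = 0" using bf_ee[OF n g1c(3)] by simp
  have p2: "\<forall>u\<in>lspan (take s2 (G2 n)). bform n (ee 2) u = 0"
  proof
    fix u assume u: "u \<in> lspan (take s2 (G2 n))"
    have "Sg n u" "W2c n u" using G2_coord[OF n u] by auto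
    thus "bform n (ee 2) u = 0" unfolding bf_ee[OF n \<open>Sg n u\<close>] by (simp add: W2c_def)
  qed
  have q2: "ee (2*n-2) \<in> lspan (take s2 (G2 n))" unfolding G2_def by (rule FR_q) (use n B2 in auto)
  have "bform n (g (ee 2)) (ee (2*n-2)) = 0" by (rule perp_transfer[OF g sub2 V(6) p2 B2(1) q2])
  hence a2: "g (ee 2) 1 = 0" using bf_ee[OF n g1c(4)] by simp
  have r1: "xc = vadd (ee 1) (ee 2)" by (rule ext) (simp add: vadd_def ee_def xc_def)
  have "g xc = vadd (g (ee 1)) (g (ee 2))" unfolding r1 by (rule orth_add[OF g V(5) V(6)])
  hence "\<forall>i. k * xc i = g (ee 1) i + g (ee 2) i" using k by (simp add: vadd_def fun_eq_iff)
  hence r1a: "k = g (ee 1) 1 + g (ee 2) 1" "k = g (ee 1) 2 + g (ee 2) 2"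
    by (metis mult.right_neutral xc_def one_neq_zero)+
  have r2: "vadd (xa l) (ee 2) = vadd xb (vscale l (ee 1))"
    by (rule ext) (simp add: vadd_def vscale_def ee_def xa_def xb_def)
  have "vadd (g (xa l)) (g (ee 2)) = vadd (g xb) (vscale l (g (ee 1)))"
    using arg_cong[OF r2, of g] orth_add[OF g V(1) V(6)] orth_add[OF g V(2) vecs_vscale[OF V(5)]]
      orth_scale[OF g V(5)] by simp
  hence r2a: "g (xa l) 0 + g (ee 2) 0 = g xb 0 + l * g (ee 1) 0"
    "g (xa l) 1 + g (ee 2) 1 = g xb 1 + l * g (ee 1) 1"
    "g (xa l) 2 + g (ee 2) 2 = g xb 2 + l * g (ee 1) 2"
    by (auto simp: vadd_def vscale_def dest: fun_cong)
  have "m * k = l * k" using r1a r2a U1 U2 a1 a2 g1c by (simp add: algebra_simps)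
  thus "l = m" using k0 by simp
qed

lemma case1:
  fixes l m :: "'a::field"
  assumes n: "n \<ge> 3" and g: "g \<in> orth_group n" and l: "l \<noteq> 0" and m: "m \<noteq> 0"
    and B2: "g ` lspan (take s2 (G2 n)) = lspan (take s2 (G2 n))" "2 \<le> s2"
    and B3: "g ` lspan (take s3 (G3 n)) = lspan (take s3 (G3 n))" "2 \<le> s3"
    and U2: "g xb 1 = 0" "g xb 2 = g xb 0"
    and U3: "g xc 0 = 0" "g xc 2 = g xc 1"
    and L1a: "g ` lspan (take 1 (G1 n l)) = lspan (take 1 (G1 n m))"
    and L1b: "g ` lspan (take n (G1 n l)) = lspan (take n (G1 n m))"
  shows "l = m"
proof -
  note V = vecs_all[OF n]
  have "xa l \<in> lspan (take 1 (G1 n l))" unfolding G1_def by (rule FR_x) (use n in auto)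
  hence "g (xa l) \<in> lspan (take 1 (G1 n m))" using L1a by blast
  moreover have "take 1 (G1 n m) = [xa m]" using n by (simp add: G1_def FR_take fr_def)
  ultimately have "g (xa l) \<in> lspan [xa m]" by metis
  then obtain k where k: "g (xa l) = (\<lambda>i. k * xa m i)" using lspan_single by blast
  have k0: "k \<noteq> 0"
  proof
    assume "k = 0"
    hence "g (xa l) = (\<lambda>i. 0)" using k by simp
    moreover have "xa l \<noteq> (\<lambda>i. (0::'a))" by (metis xa_def one_neq_zero)
    ultimately show False using orth_nz[OF g V(1)] by blast
  qed
  have W: "ee 0 \<in> lspan (take n (G1 n l))" "xa l \<in> lspan (take n (G1 n l))"
    using FR_t[OF n] FR_x[of n n] n by (auto simp: G1_def)
  have e1: "ee 1 = vscale (1/l) (vadd (xa l) (vscale (-1) (ee 0)))"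
    by (rule ext) (use l in \<open>simp add: vadd_def vscale_def ee_def xa_def\<close>)
  have W': "ee 1 \<in> lspan (take n (G1 n l))" unfolding e1 by (intro lspan_add lspan_scale W)
  have g1: "g (ee 0) \<in> lspan (take n (G1 n m))" "g (ee 1) \<in> lspan (take n (G1 n m))"
    using W W' L1b by blast+
  have g1c: "g (ee 0) 2 = 0" "g (ee 1) 2 = 0" "Sg n (g (ee 0))" "Sg n (g (ee 1))"
    using G1_coord[OF n g1(1)] G1_coord[OF n g1(2)] by (auto simp: W1c_def)
  have sub2: "lspan (take s2 (G2 n)) \<subseteq> vecs n"
    using lspan_FR_vecs G2_good(1)[OF n] unfolding G2_def by blast
  have sub3: "lspan (take s3 (G3 n)) \<subseteq> vecs n"
    using lspan_FR_vecs G3_good(1)[OF n] unfolding G3_def by blast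
  have p0: "\<forall>u\<in>lspan (take s2 (G2 n)). bform n (ee 0) u = 0"
  proof
    fix u assume u: "u \<in> lspan (take s2 (G2 n))"
    have "Sg n u" "W2c n u" using G2_coord[OF n u] by auto
    thus "bform n (ee 0) u = 0" unfolding bf_ee[OF n \<open>Sg n u\<close>] by (simp add: W2c_def)
  qed
  have q0: "ee (2*n-2) \<in> lspan (take s2 (G2 n))" unfolding G2_def by (rule FR_q) (use n B2 in auto)
  have "bform n (g (ee 0)) (ee (2*n-2)) = 0" by (rule perp_transfer[OF g sub2 V(4) p0 B2(1) q0])
  hence a0: "g (ee 0) 1 = 0" using bf_ee[OF n g1c(3)] by simp
  have p1: "\<forall>u\<in>lspan (take s3 (G3 n)). bform n (ee 1) u = 0"
  proof
    fix u assume u: "u \<in> lspan (take s3 (G3 n))"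
    have "Sg n u" "W3c n u" using G3_coord[OF n u] by auto
    thus "bform n (ee 1) u = 0" unfolding bf_ee[OF n \<open>Sg n u\<close>] by (simp add: W3c_def)
  qed
  have q1: "ee (2*n-1) \<in> lspan (take s3 (G3 n))" unfolding G3_def by (rule FR_q) (use n B3 in auto)
  have "bform n (g (ee 1)) (ee (2*n-1)) = 0" by (rule perp_transfer[OF g sub3 V(5) p1 B3(1) q1])
  hence a1: "g (ee 1) 0 = 0" using bf_ee[OF n g1c(4)] by simp
  have r1: "xa l = vadd (ee 0) (vscale l (ee 1))" by (rule ext) (simp add: vadd_def vscale_def ee_def xa_def)
  have "g (xa l) = vadd (g (ee 0)) (vscale l (g (ee 1)))"
    unfolding r1 using orth_add[OF g V(4) vecs_vscale[OF V(5)]] orth_scale[OF g V(5)] by simp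
  hence "\<forall>i. k * xa m i = g (ee 0) i + l * g (ee 1) i" using k by (simp add: vadd_def vscale_def fun_eq_iff)
  hence r1a: "k = g (ee 0) 0 + l * g (ee 1) 0" "k * m = g (ee 0) 1 + l * g (ee 1) 1"
    by (metis mult.right_neutral xa_def one_neq_zero)+
  have r2: "vadd xb (ee 1) = vadd xc (ee 0)"
    by (rule ext) (simp add: vadd_def ee_def xb_def xc_def)
  have "vadd (g xb) (g (ee 1)) = vadd (g xc) (g (ee 0))"
    using arg_cong[OF r2, of g] orth_add[OF g V(2) V(5)] orth_add[OF g V(3) V(4)] by simp
  hence r2a: "g xb 0 + g (ee 1) 0 = g xc 0 + g (ee 0) 0"
    "g xb 1 + g (ee 1) 1 = g xc 1 + g (ee 0) 1"
    "g xb 2 + g (ee 1) 2 = g xc 2 + g (ee 0) 2"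
    by (auto simp: vadd_def dest: fun_cong)
  have "m * k = l * k" using r1a r2a U2 U3 a0 a1 g1c by (simp add: algebra_simps)
  thus "l = m" using k0 by simp
qed

lemma case2:
  fixes l m :: "'a::field"
  assumes n: "n \<ge> 3" and g: "g \<in> orth_group n" and l: "l \<noteq> 0"
    and B1: "g ` lspan (take s1 (G1 n l)) = lspan (take s1 (G1 n m))" "2 \<le> s1"
    and B3: "g ` lspan (take s3 (G3 n)) = lspan (take s3 (G3 n))" "2 \<le> s3"
    and U1: "g (xa l) 1 = m * g (xa l) 0" "g (xa l) 2 = 0"
    and U3: "g xc 0 = 0" "g xc 2 = g xc 1"
    and L2a: "g ` lspan (take 1 (G2 n)) = lspan (take 1 (G2 n))"
    and L2b: "g ` lspan (take n (G2 n)) = lspan (take n (G2 n))"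
  shows "l = m"
proof -
  note V = vecs_all[OF n]
  have "xb \<in> lspan (take 1 (G2 n))" unfolding G2_def by (rule FR_x) (use n in auto)
  hence "g xb \<in> lspan (take 1 (G2 n))" using L2a by blast
  moreover have "take 1 (G2 n) = [xb]" using n by (simp add: G2_def FR_take fr_def)
  ultimately have "g xb \<in> lspan [xb]" by metis
  then obtain k where k: "g xb = (\<lambda>i. k * xb i)" using lspan_single by blast
  have k0: "k \<noteq> 0"
  proof
    assume "k = 0"
    hence "g xb = (\<lambda>i. 0)" using k by simp
    moreover have "xb \<noteq> (\<lambda>i. (0::'a))" by (metis xb_def one_neq_zero)
    ultimately show False using orth_nz[OF g V(2)] by blast
  qed
  have W: "ee 0 \<in> lspan (take n (G2 n))" "xb \<in> lspan (take n (G2 n))"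
    using FR_t[OF n] FR_x[of n n] n by (auto simp: G2_def)
  have e2: "ee 2 = vadd xb (vscale (-1) (ee 0))"
    by (rule ext) (simp add: vadd_def vscale_def ee_def xb_def)
  have W': "ee 2 \<in> lspan (take n (G2 n))" unfolding e2 by (intro lspan_add lspan_scale W)
  have g1: "g (ee 0) \<in> lspan (take n (G2 n))" "g (ee 2) \<in> lspan (take n (G2 n))"
    using W W' L2b by blast+
  have g1c: "g (ee 0) 1 = 0" "g (ee 2) 1 = 0" "Sg n (g (ee 0))" "Sg n (g (ee 2))"
    using G2_coord[OF n g1(1)] G2_coord[OF n g1(2)] by (auto simp: W2c_def)
  have sub1: "lspan (take s1 (G1 n l)) \<subseteq> vecs n"
    using lspan_FR_vecs G1_good(1)[OF n l] unfolding G1_def by blast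
  have sub3: "lspan (take s3 (G3 n)) \<subseteq> vecs n"
    using lspan_FR_vecs G3_good(1)[OF n] unfolding G3_def by blast
  have p0: "\<forall>u\<in>lspan (take s1 (G1 n l)). bform n (ee 0) u = 0"
  proof
    fix u assume u: "u \<in> lspan (take s1 (G1 n l))"
    have "Sg n u" "W1c n u" using G1_coord[OF n u] by auto
    thus "bform n (ee 0) u = 0" unfolding bf_ee[OF n \<open>Sg n u\<close>] by (simp add: W1c_def)
  qed
  have q0: "ee (2*n-3) \<in> lspan (take s1 (G1 n m))" unfolding G1_def by (rule FR_q) (use n B1 in auto)
  have "bform n (g (ee 0)) (ee (2*n-3)) = 0" by (rule perp_transfer[OF g sub1 V(4) p0 B1(1) q0])
  hence a0: "g (ee 0) 2 = 0" using bf_ee[OF n g1c(3)] by simp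
  have p2: "\<forall>u\<in>lspan (take s3 (G3 n)). bform n (ee 2) u = 0"
  proof
    fix u assume u: "u \<in> lspan (take s3 (G3 n))"
    have "Sg n u" "W3c n u" using G3_coord[OF n u] by auto
    thus "bform n (ee 2) u = 0" unfolding bf_ee[OF n \<open>Sg n u\<close>] by (simp add: W3c_def)
  qed
  have q2: "ee (2*n-1) \<in> lspan (take s3 (G3 n))" unfolding G3_def by (rule FR_q) (use n B3 in auto)
  have "bform n (g (ee 2)) (ee (2*n-1)) = 0" by (rule perp_transfer[OF g sub3 V(6) p2 B3(1) q2])
  hence a2: "g (ee 2) 0 = 0" using bf_ee[OF n g1c(4)] by simp
  have r1: "xb = vadd (ee 0) (ee 2)" by (rule ext) (simp add: vadd_def ee_def xb_def)
  have "g xb = vadd (g (ee 0)) (g (ee 2))" unfolding r1 by (rule orth_add[OF g V(4) V(6)])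
  hence "\<forall>i. k * xb i = g (ee 0) i + g (ee 2) i" using k by (simp add: vadd_def fun_eq_iff)
  hence r1a: "k = g (ee 0) 0 + g (ee 2) 0" "k = g (ee 0) 2 + g (ee 2) 2"
    by (metis mult.right_neutral xb_def zero_neq_numeral)+
  have r2: "vadd (vscale l xc) (ee 0) = vadd (xa l) (vscale l (ee 2))"
    by (rule ext) (simp add: vadd_def vscale_def ee_def xa_def xc_def)
  have "vadd (vscale l (g xc)) (g (ee 0)) = vadd (g (xa l)) (vscale l (g (ee 2)))"
    using arg_cong[OF r2, of g] orth_add[OF g vecs_vscale[OF V(3)] V(4)]
      orth_add[OF g V(1) vecs_vscale[OF V(6)]] orth_scale[OF g V(3)] orth_scale[OF g V(6)] by simp
  hence r2a: "l * g xc 0 + g (ee 0) 0 = g (xa l) 0 + l * g (ee 2) 0"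
    "l * g xc 1 + g (ee 0) 1 = g (xa l) 1 + l * g (ee 2) 1"
    "l * g xc 2 + g (ee 0) 2 = g (xa l) 2 + l * g (ee 2) 2"
    by (auto simp: vadd_def vscale_def dest: fun_cong)
  have "g xc 2 = k" using r2a(3) r1a a0 U1 l by simp
  hence "l * k = m * k" using r2a r1a U1 U3 a0 a2 g1c by (simp add: algebra_simps)
  thus "l = m" using k0 by simp
qed

lemma ppp_alg:
  fixes a b c d e f g h p q r t l m :: "'a::field"
  assumes e1: "m*a*f + b*e = 0" and e2: "m*a*h + b*g = l" and e3: "m*c*f + d*e = 1" and e4: "m*c*h + d*g = 0"
    and e5: "a*q + b*p = 0" and e6: "a*t + b*r = 1" and e7: "c*q + d*p = 1" and e8: "c*t + d*r = 0"
    and e9: "e*q + f*p = 0" and e10: "e*t + f*r = 1" and e11: "g*q + h*p = 1" and e12: "g*t + h*r = 0"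
  shows "l = m \<or> l * m = 1"
proof -
  have "(a*d - b*c)*(q*r - p*t) = (a*q+b*p)*(c*t+d*r) - (a*t+b*r)*(c*q+d*p)" by algebra
  hence "(a*d - b*c)*(q*r - p*t) = -1" using e5 e6 e7 e8 by simp
  hence N: "q*r - p*t \<noteq> 0" by auto
  have "(a - e)*(q*r - p*t) = ((a*q+b*p) - (e*q+f*p))*r - ((a*t+b*r) - (e*t+f*r))*p" by algebra
  hence "(a - e)*(q*r - p*t) = 0" using e5 e6 e9 e10 by simp
  hence ae: "a = e" using N by simp
  have "(b - f)*(q*r - p*t) = ((a*t+b*r) - (e*t+f*r))*q - ((a*q+b*p) - (e*q+f*p))*t" by algebra
  hence "(b - f)*(q*r - p*t) = 0" using e5 e6 e9 e10 by simp
  hence bf: "b = f" using N by simp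
  have "(c - g)*(q*r - p*t) = ((c*q+d*p) - (g*q+h*p))*r - ((c*t+d*r) - (g*t+h*r))*p" by algebra
  hence "(c - g)*(q*r - p*t) = 0" using e7 e8 e11 e12 by simp
  hence cg: "c = g" using N by simp
  have "(d - h)*(q*r - p*t) = ((c*t+d*r) - (g*t+h*r))*q - ((c*q+d*p) - (g*q+h*p))*t" by algebra
  hence "(d - h)*(q*r - p*t) = 0" using e7 e8 e11 e12 by simp
  hence dh: "d = h" using N by simp
  have f1: "a*b*(m+1) = 0" using e1 ae bf by (simp add: algebra_simps)
  have f2: "m*a*d + b*c = l" using e2 cg dh by simp
  have f3: "m*c*b + d*a = 1" using e3 ae bf by (simp add: algebra_simps)
  have f4: "c*d*(m+1) = 0" using e4 cg dh by (simp add: algebra_simps)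
  show ?thesis
  proof (cases "m + 1 = 0")
    case True
    hence "m = -1" by (simp add: eq_neg_iff_add_eq_0)
    thus ?thesis using f2 f3 by (simp add: algebra_simps)
  next
    case False
    hence "a = 0 \<or> b = 0" using f1 by simp
    thus ?thesis
    proof
      assume "a = 0"
      hence "b*c = l" "b*(c*m) = 1" using f2 f3 by (simp_all add: algebra_simps)
      hence "l * m = 1" by (metis mult.assoc)
      thus ?thesis by simp
    next
      assume "b = 0"
      hence "a*(d*m) = l" "a*d = 1" using f2 f3 by (simp_all add: algebra_simps)
      hence "l = m" by (metis mult.assoc mult_1)
      thus ?thesis by simp
    qed
  qed
qed

lemma bf12: assumes n: "n \<ge> 3" and "Sg n u" "Sg n v" "W1c n u" "u 1 = m * u 0" "W2c n v" "v 2 = v 0"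
  shows "bform n u v = m * u 0 * v (2*n-2) + u (2*n-3) * v 0"
  using assms by (simp add: bform_formula W1c_def W2c_def)
lemma bf13: assumes n: "n \<ge> 3" and "Sg n u" "Sg n v" "W1c n u" "u 1 = m * u 0" "W3c n v" "v 2 = v 1"
  shows "bform n u v = u 0 * v (2*n-1) + u (2*n-3) * v 1"
  using assms by (simp add: bform_formula W1c_def W3c_def)
lemma bf23: assumes n: "n \<ge> 3" and "Sg n u" "Sg n v" "W2c n u" "u 2 = u 0" "W3c n v" "v 2 = v 1"
  shows "bform n u v = u 0 * v (2*n-1) + u (2*n-2) * v 1"
  using assms by (simp add: bform_formula W2c_def W3c_def)

lemma case0:
  fixes l m :: "'a::field"
  assumes n: "n \<ge> 3" and g: "g \<in> orth_group n"
    and B1: "g ` lspan (take s1 (G1 n l)) = lspan (take s1 (G1 n m))" "2 \<le> s1" "s1 \<le> n - 1"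
    and B2: "g ` lspan (take s2 (G2 n)) = lspan (take s2 (G2 n))" "2 \<le> s2" "s2 \<le> n - 1"
    and B3: "g ` lspan (take s3 (G3 n)) = lspan (take s3 (G3 n))" "2 \<le> s3" "s3 \<le> n - 1"
  shows "l = m \<or> l * m = 1"
proof -
  note V = vecs_all[OF n]
  have VA: "ee (2*n-3) \<in> vecs n" "ee (2*n-2) \<in> vecs n" "ee (2*n-1) \<in> vecs n"
    using cs_vecs[OF n] cs_all by blast+
  have SA: "Sg n (xa l)" "Sg n xb" "Sg n xc" "Sg n (ee (2*n-3))" "Sg n (ee (2*n-2))" "Sg n (ee (2*n-1))"
    using cs_Sg[OF n] cs_all by blast+
  have "xa l \<in> lspan (take s1 (G1 n l))" "ee (2*n-3) \<in> lspan (take s1 (G1 n l))"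
    using FR_x[of s1 n] FR_q[of s1 n] n B1 unfolding G1_def by auto
  hence m1: "g (xa l) \<in> lspan (take s1 (G1 n m))" "g (ee (2*n-3)) \<in> lspan (take s1 (G1 n m))"
    using B1(1) by blast+
  have "xb \<in> lspan (take s2 (G2 n))" "ee (2*n-2) \<in> lspan (take s2 (G2 n))"
    using FR_x[of s2 n] FR_q[of s2 n] n B2 unfolding G2_def by auto
  hence m2: "g (xb) \<in> lspan (take s2 (G2 n))" "g (ee (2*n-2)) \<in> lspan (take s2 (G2 n))"
    using B2(1) by blast+
  have "xc \<in> lspan (take s3 (G3 n))" "ee (2*n-1) \<in> lspan (take s3 (G3 n))"
    using FR_x[of s3 n] FR_q[of s3 n] n B3 unfolding G3_def by auto
  hence m3: "g (xc) \<in> lspan (take s3 (G3 n))" "g (ee (2*n-1)) \<in> lspan (take s3 (G3 n))"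
    using B3(1) by blast+
  note c1a = G1_coord[OF n m1(1)] and c1b = G1_coord[OF n m1(2)]
  note c2a = G2_coord[OF n m2(1)] and c2b = G2_coord[OF n m2(2)]
  note c3a = G3_coord[OF n m3(1)] and c3b = G3_coord[OF n m3(2)]
  have o: "\<And>u v. u \<in> vecs n \<Longrightarrow> v \<in> vecs n \<Longrightarrow> bform n (g u) (g v) = bform n u v"
    using orth_bform[OF g] by blast
  have x12: "bform n (xa l) xb = 0" "bform n (xa l) (ee (2*n-2)) = l"
     "bform n (ee (2*n-3)) xb = 1" "bform n (ee (2*n-3)) (ee (2*n-2)) = 0"
    "bform n (xa l) xc = 0" "bform n (xa l) (ee (2*n-1)) = 1"
     "bform n (ee (2*n-3)) xc = 1" "bform n (ee (2*n-3)) (ee (2*n-1)) = 0"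
    "bform n xb xc = 0" "bform n xb (ee (2*n-1)) = 1"
     "bform n (ee (2*n-2)) xc = 1" "bform n (ee (2*n-2)) (ee (2*n-1)) = 0"
    unfolding bf_ee[OF n SA(1)] bf_ee[OF n SA(2)] bf_ee[OF n SA(4)] bf_ee[OF n SA(5)]
    using n by (simp_all add: xa_def xb_def xc_def ee_def idx_ne[OF n])
  note L12 = bf12[OF n c1a(2) c2a(2) c1a(1) c1a(3)[OF B1(3)] c2a(1) c2a(3)[OF B2(3)]]
    bf12[OF n c1a(2) c2b(2) c1a(1) c1a(3)[OF B1(3)] c2b(1) c2b(3)[OF B2(3)]]
    bf12[OF n c1b(2) c2a(2) c1b(1) c1b(3)[OF B1(3)] c2a(1) c2a(3)[OF B2(3)]]
    bf12[OF n c1b(2) c2b(2) c1b(1) c1b(3)[OF B1(3)] c2b(1) c2b(3)[OF B2(3)]]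
  note L13 = bf13[OF n c1a(2) c3a(2) c1a(1) c1a(3)[OF B1(3)] c3a(1) c3a(3)[OF B3(3)]]
    bf13[OF n c1a(2) c3b(2) c1a(1) c1a(3)[OF B1(3)] c3b(1) c3b(3)[OF B3(3)]]
    bf13[OF n c1b(2) c3a(2) c1b(1) c1b(3)[OF B1(3)] c3a(1) c3a(3)[OF B3(3)]]
    bf13[OF n c1b(2) c3b(2) c1b(1) c1b(3)[OF B1(3)] c3b(1) c3b(3)[OF B3(3)]]
  note L23 = bf23[OF n c2a(2) c3a(2) c2a(1) c2a(3)[OF B2(3)] c3a(1) c3a(3)[OF B3(3)]]
    bf23[OF n c2a(2) c3b(2) c2a(1) c2a(3)[OF B2(3)] c3b(1) c3b(3)[OF B3(3)]]
    bf23[OF n c2b(2) c3a(2) c2b(1) c2b(3)[OF B2(3)] c3a(1) c3a(3)[OF B3(3)]]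
    bf23[OF n c2b(2) c3b(2) c2b(1) c2b(3)[OF B2(3)] c3b(1) c3b(3)[OF B3(3)]]
  show ?thesis
  proof (rule ppp_alg)
    show "m * g (xa l) 0 * g xb (2*n-2) + g (xa l) (2*n-3) * g xb 0 = 0"
      using L12(1) o[OF V(1) V(2)] x12(1) by metis
    show "m * g (xa l) 0 * g (ee (2*n-2)) (2*n-2) + g (xa l) (2*n-3) * g (ee (2*n-2)) 0 = l"
      using L12(2) o[OF V(1) VA(2)] x12(2) by metis
    show "m * g (ee (2*n-3)) 0 * g xb (2*n-2) + g (ee (2*n-3)) (2*n-3) * g xb 0 = 1"
      using L12(3) o[OF VA(1) V(2)] x12(3) by metis
    show "m * g (ee (2*n-3)) 0 * g (ee (2*n-2)) (2*n-2) + g (ee (2*n-3)) (2*n-3) * g (ee (2*n-2)) 0 = 0"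
      using L12(4) o[OF VA(1) VA(2)] x12(4) by metis
    show "g (xa l) 0 * g xc (2*n-1) + g (xa l) (2*n-3) * g xc 1 = 0"
      using L13(1) o[OF V(1) V(3)] x12(5) by metis
    show "g (xa l) 0 * g (ee (2*n-1)) (2*n-1) + g (xa l) (2*n-3) * g (ee (2*n-1)) 1 = 1"
      using L13(2) o[OF V(1) VA(3)] x12(6) by metis
    show "g (ee (2*n-3)) 0 * g xc (2*n-1) + g (ee (2*n-3)) (2*n-3) * g xc 1 = 1"
      using L13(3) o[OF VA(1) V(3)] x12(7) by metis
    show "g (ee (2*n-3)) 0 * g (ee (2*n-1)) (2*n-1) + g (ee (2*n-3)) (2*n-3) * g (ee (2*n-1)) 1 = 0"
      using L13(4) o[OF VA(1) VA(3)] x12(8) by metis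
    show "g xb 0 * g xc (2*n-1) + g xb (2*n-2) * g xc 1 = 0"
      using L23(1) o[OF V(2) V(3)] x12(9) by metis
    show "g xb 0 * g (ee (2*n-1)) (2*n-1) + g xb (2*n-2) * g (ee (2*n-1)) 1 = 1"
      using L23(2) o[OF V(2) VA(3)] x12(10) by metis
    show "g (ee (2*n-2)) 0 * g xc (2*n-1) + g (ee (2*n-2)) (2*n-2) * g xc 1 = 1"
      using L23(3) o[OF VA(2) V(3)] x12(11) by metis
    show "g (ee (2*n-2)) 0 * g (ee (2*n-1)) (2*n-1) + g (ee (2*n-2)) (2*n-2) * g (ee (2*n-1)) 1 = 0"
      using L23(4) o[OF VA(2) VA(3)] x12(12) by metis
  qed
qed

definition Rel :: "nat \<Rightarrow> ((nat \<Rightarrow> 'a::field) \<Rightarrow> (nat \<Rightarrow> 'a)) \<Rightarrow> (nat \<Rightarrow> 'a) list \<Rightarrow> (nat \<Rightarrow> 'a) list \<Rightarrow> bool" where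
  "Rel n g F F' \<longleftrightarrow> (\<exists>s. 2 \<le> s \<and> s \<le> n - 1 \<and> g ` lspan (take s F) = lspan (take s F')) \<or>
     (g ` lspan (take 1 F) = lspan (take 1 F') \<and> g ` lspan (take n F) = lspan (take n F'))"

lemma Rel_B: "Rel n g F F' \<Longrightarrow> n \<ge> 3 \<Longrightarrow> \<exists>s. 2 \<le> s \<and> g ` lspan (take s F) = lspan (take s F')"
  unfolding Rel_def
proof (elim disjE exE conjE)
  fix s assume "2 \<le> s" "g ` lspan (take s F) = lspan (take s F')"
  thus ?thesis by blast
next
  assume "g ` lspan (take n F) = lspan (take n F')" "n \<ge> 3"
  thus ?thesis by (intro exI[of _ n]) auto
qed

lemma Rel_U: assumes "Rel n g F F'" "n \<ge> 3" "x \<in> lspan (take 1 F)"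
  shows "\<exists>s. 1 \<le> s \<and> s \<le> n - 1 \<and> g x \<in> lspan (take s F')"
  using assms(1) unfolding Rel_def
proof
  assume "\<exists>s\<ge>2. s \<le> n - 1 \<and> g ` lspan (take s F) = lspan (take s F')"
  then obtain s where s: "2 \<le> s" "s \<le> n - 1" "g ` lspan (take s F) = lspan (take s F')" by blast
  have "x \<in> lspan (take s F)" using lspan_take_mono[of 1 s F] s assms(3) by auto
  hence "g x \<in> lspan (take s F')" using s(3) by blast
  thus ?thesis using s by (intro exI[of _ s]) auto
next
  assume "g ` lspan (take 1 F) = lspan (take 1 F') \<and> g ` lspan (take n F) = lspan (take n F')"
  hence "g x \<in> lspan (take 1 F')" using assms(3) by blast
  thus ?thesis using assms(2) by (intro exI[of _ 1]) auto
qed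

lemma core_all:
  fixes l m :: "'a::field"
  assumes n: "n \<ge> 3" and g: "g \<in> orth_group n" and l: "l \<noteq> 0" and m: "m \<noteq> 0"
    and R1: "Rel n g (G1 n l) (G1 n m)" and R2: "Rel n g (G2 n) (G2 n)" and R3: "Rel n g (G3 n) (G3 n)"
  shows "l = m \<or> l * m = 1"
proof -
  obtain s1 where S1: "2 \<le> s1" "g ` lspan (take s1 (G1 n l)) = lspan (take s1 (G1 n m))"
    using Rel_B[OF R1 n] by blast
  obtain s2 where S2: "2 \<le> s2" "g ` lspan (take s2 (G2 n)) = lspan (take s2 (G2 n))"
    using Rel_B[OF R2 n] by blast
  obtain s3 where S3: "2 \<le> s3" "g ` lspan (take s3 (G3 n)) = lspan (take s3 (G3 n))"
    using Rel_B[OF R3 n] by blast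
  have "xa l \<in> lspan (take 1 (G1 n l))" unfolding G1_def by (rule FR_x) (use n in auto)
  then obtain t1 where "1 \<le> t1" "t1 \<le> n - 1" "g (xa l) \<in> lspan (take t1 (G1 n m))"
    using Rel_U[OF R1 n] by blast
  hence U1: "g (xa l) 1 = m * g (xa l) 0" "g (xa l) 2 = 0" using G1_coord[OF n] by (auto simp: W1c_def)
  have "xb \<in> lspan (take 1 (G2 n))" unfolding G2_def by (rule FR_x) (use n in auto)
  then obtain t2 where "1 \<le> t2" "t2 \<le> n - 1" "g xb \<in> lspan (take t2 (G2 n))"
    using Rel_U[OF R2 n] by blast
  hence U2: "g xb 1 = 0" "g xb 2 = g xb 0" using G2_coord[OF n] by (auto simp: W2c_def)
  have "xc \<in> lspan (take 1 (G3 n))" unfolding G3_def by (rule FR_x) (use n in auto)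
  then obtain t3 where "1 \<le> t3" "t3 \<le> n - 1" "g xc \<in> lspan (take t3 (G3 n))"
    using Rel_U[OF R3 n] by blast
  hence U3: "g xc 0 = 0" "g xc 2 = g xc 1" using G3_coord[OF n] by (auto simp: W3c_def)
  show ?thesis
  proof (cases "g ` lspan (take 1 (G3 n)) = lspan (take 1 (G3 n)) \<and> g ` lspan (take n (G3 n)) = lspan (take n (G3 n))")
    case True
    thus ?thesis using case3[OF n g l S1(2,1) S2(2,1) U1 U2] by blast
  next
    case F3: False
    show ?thesis
    proof (cases "g ` lspan (take 1 (G1 n l)) = lspan (take 1 (G1 n m)) \<and> g ` lspan (take n (G1 n l)) = lspan (take n (G1 n m))")
      case True
      thus ?thesis using case1[OF n g l m S2(2,1) S3(2,1) U2 U3] by blast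
    next
      case F1: False
      show ?thesis
      proof (cases "g ` lspan (take 1 (G2 n)) = lspan (take 1 (G2 n)) \<and> g ` lspan (take n (G2 n)) = lspan (take n (G2 n))")
        case True
        thus ?thesis using case2[OF n g l S1(2,1) S3(2,1) U1 U3] by blast
      next
        case F2: False
        obtain p1 where P1: "2 \<le> p1" "p1 \<le> n - 1" "g ` lspan (take p1 (G1 n l)) = lspan (take p1 (G1 n m))"
          using R1 F1 unfolding Rel_def by blast
        obtain p2 where P2: "2 \<le> p2" "p2 \<le> n - 1" "g ` lspan (take p2 (G2 n)) = lspan (take p2 (G2 n))"
          using R2 F2 unfolding Rel_def by blast
        obtain p3 where P3: "2 \<le> p3" "p3 \<le> n - 1" "g ` lspan (take p3 (G3 n)) = lspan (take p3 (G3 n))"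
          using R3 F3 unfolding Rel_def by blast
        show ?thesis by (rule case0[OF n g P1(3,1,2) P2(3,1,2) P3(3,1,2)])
      qed
    qed
  qed
qed

lemma act_flag_of:
  assumes "act_flag g (flag_of n F a) = flag_of n F' a" "j < length a"
  shows "g ` lspan (take (psum a j) F) = lspan (take (psum a j) F')"
proof -
  have "map (\<lambda>j. g ` lspan (take (psum a j) F)) [0..<length a] = map (\<lambda>j. lspan (take (psum a j) F')) [0..<length a]"
    using assms(1) by (simp add: act_flag_def flag_of_def comp_def)
  thus ?thesis using assms(2) by (simp add: map_eq_conv)
qed

lemma Rel_of_flag:
  assumes a: "admissible_seq n a" "a \<noteq> [1]" "a \<noteq> [n]" and n: "n \<ge> 3"
    and e: "act_flag g (flag_of n F a) = flag_of n F' a"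
  shows "Rel n g F F'"
  using seq_type[OF a]
proof
  assume "\<exists>j<length a. 2 \<le> psum a j \<and> psum a j \<le> n - 1"
  then obtain j where "j < length a" "2 \<le> psum a j" "psum a j \<le> n - 1" by blast
  thus ?thesis unfolding Rel_def using act_flag_of[OF e] by blast
next
  assume a1: "a = [1, n - 1]"
  have "psum a 0 = 1" "psum a 1 = n" using n by (simp_all add: a1 psum_def)
  thus ?thesis unfolding Rel_def using act_flag_of[OF e, of 0] act_flag_of[OF e, of 1] a1 by auto
qed

lemma id_orth: "id \<in> orth_group n"
  by (simp add: orth_group_def bij_betw_def)

lemma act_flag_id: "act_flag id X = X"
  by (simp add: act_flag_def)

lemma same_orbit:
  assumes "triple_orbit n (X, Y, Z) = triple_orbit n (X', Y', Z')"
  shows "\<exists>g\<in>orth_group n. act_flag g X = X' \<and> act_flag g Y = Y' \<and> act_flag g Z = (Z' :: (nat \<Rightarrow> 'a::field) set list)"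
proof -
  have "(X', Y', Z') \<in> triple_orbit n (X', Y', Z')"
    unfolding triple_orbit_def using id_orth[of n] act_flag_id
    by (simp only: prod.case) (rule CollectI, rule exI[of _ id], simp add: act_flag_def)
  hence "(X', Y', Z') \<in> triple_orbit n (X, Y, Z)" using assms by simp
  then obtain g where "g \<in> orth_group n" "(X', Y', Z') = (act_flag g X, act_flag g Y, act_flag g Z)"
    unfolding triple_orbit_def by auto
  thus ?thesis by auto
qed

lemma finite_fibers:
  assumes "finite (f ` A)" "\<forall>y. finite {x\<in>A. f x = y}"
  shows "finite A"
proof -
  have "A = (\<Union>y\<in>f ` A. {x\<in>A. f x = y})" by auto
  thus ?thesis using assms by (metis (no_types, lifting) finite_UN_I)
qed

theorem proposition1p3:
  fixes n :: nat and a b c :: "nat list"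
  assumes "infinite (UNIV :: 'a::field set)"
    and "(2::'a) \<noteq> 0"
    and "n \<ge> 3"
    and "admissible_seq n a" and "admissible_seq n b" and "admissible_seq n c"
    and "finitely_many_orbits TYPE('a) n a b c"
  shows "a = [1] \<or> a = [n] \<or> b = [1] \<or> b = [n] \<or> c = [1] \<or> c = [n]"
proof (rule ccontr)
  assume H: "\<not> (a = [1] \<or> a = [n] \<or> b = [1] \<or> b = [n] \<or> c = [1] \<or> c = [n])"
  have n: "n \<ge> 3" by fact
  define T where "T l = (flag_of n (G1 n l) a, flag_of n (G2 n :: (nat \<Rightarrow> 'a) list) b,
     flag_of n (G3 n :: (nat \<Rightarrow> 'a) list) c)" for l :: 'a
  define S where "S = {l::'a. l \<noteq> 0}"
  define Orb where "Orb = (triple_orbit n :: _ \<Rightarrow> ((nat \<Rightarrow> 'a) set list \<times> _) set)"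
  have inT: "T l \<in> triple_space n a b c" if "l \<noteq> 0" for l
    unfolding T_def triple_space_def
    using flag_of_in[OF _ G1_good(1,2,3)[OF n that] assms(4)] flag_of_in[OF _ G2_good(1,2,3)[OF n] assms(5)]
      flag_of_in[OF _ G3_good(1,2,3)[OF n] assms(6)] by (simp add: G1_def G2_def G3_def)
  have "(\<lambda>l. Orb (T l)) ` S \<subseteq> Orb ` triple_space n a b c" using inT unfolding S_def by auto
  moreover have "finite (Orb ` triple_space n a b c)"
    using assms(7) unfolding finitely_many_orbits_def Orb_def .
  ultimately have fin: "finite ((\<lambda>l. Orb (T l)) ` S)" by (rule finite_subset)
  have fib: "finite {l\<in>S. Orb (T l) = y}" for y
  proof (cases "{l\<in>S. Orb (T l) = y} = {}")
    case True thus ?thesis by (metis finite.emptyI)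
  next
    case False
    then obtain l0 where l0: "l0 \<in> S" "Orb (T l0) = y" by blast
    have "{l\<in>S. Orb (T l) = y} \<subseteq> {l0, inverse l0}"
    proof
      fix l assume "l \<in> {l\<in>S. Orb (T l) = y}"
      hence l: "l \<noteq> 0" "Orb (T l0) = Orb (T l)" using l0 unfolding S_def by auto
      then obtain g where g: "g \<in> orth_group n" "act_flag g (flag_of n (G1 n l0) a) = flag_of n (G1 n l) a"
        "act_flag g (flag_of n (G2 n) b) = flag_of n (G2 n) b" "act_flag g (flag_of n (G3 n) c) = flag_of n (G3 n) c"
        using same_orbit[of n] unfolding Orb_def T_def by blast
      have "l0 = l \<or> l0 * l = 1"
        using core_all[OF n g(1) _ l(1) Rel_of_flag[OF assms(4) _ _ n g(2)] Rel_of_flag[OF assms(5) _ _ n g(3)]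
           Rel_of_flag[OF assms(6) _ _ n g(4)]] H l0(1) unfolding S_def by auto
      thus "l \<in> {l0, inverse l0}" using l0(1) unfolding S_def by (auto simp: field_simps)
    qed
    thus ?thesis by (rule finite_subset) simp
  qed
  have "finite S" using finite_fibers[OF fin] fib by blast
  hence "finite (insert 0 S)" by simp
  moreover have "insert 0 S = UNIV" unfolding S_def by auto
  ultimately show False using assms(1) by simp
qed

end
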